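(* Let $\alpha,\beta,d>0$, $\mathbf{c}=(c_j)_{j\in\mathbb{Z}}\in L^\infty(\mathbb{R}_+,\ell^\infty(\mathbb{Z}))$, and let $\zeta,\xi:\mathbb{R}_+\to\mathbb{R}$ be continuous. Let $(\mathbf{v},\boldsymbol{\rho})=(v_j,\rho_j)_{j\in\mathbb{Z}}$ with, for every $j$, $\rho_j\in\mathscr{C}^1([0,+\infty))$, $v_j\in\mathscr{C}^0([0,+\infty)\times[0,1])$, $\partial_tv_j,\partial_x^2v_j\in\mathscr{C}^0((0,+\infty)\times(0,1))$, $\partial_xv_j\in\mathscr{C}^0((0,+\infty)\times[0,1])$, satisfy for all $t>0$ and all integers $j$ with $\zeta(t)\le j\le\xi(t)$: $$\partial_tv_j-d\,\partial_x^2v_j\ge0\ \text{on }(0,1),\qquad \rho_j'(t)-c_j(t)\rho_j(t)\ge\alpha[v_j(t,0)+v_{j-1}(t,1)],$$ $$-d\,\partial_xv_j(t,0)+\alpha v_j(t,0)\ge\beta\rho_j(t),\qquad d\,\partial_xv_j(t,1)+\alpha v_j(t,1)\ge\beta\rho_{j+1}(t).$$ Assume $v_j(0,x)\ge0$ and $\rho_j(0)\ge0$ for all $x\in[0,1]$ and integers $\zeta(0)-1\le j\le\xi(0)+1$, and $v_j(t,x)\ge0$, $\rho_j(t)\ge0$ for all $t>0$, $x\in[0,1]$ and integers $j\in[\zeta(t)-1,\zeta(t))\cup(\xi(t),\xi(t)+1]$. Then $v_j(t,x)\ge0$ and $\rho_j(t)\ge0$ for all $t>0$, $x\in[0,1]$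 and integers $\zeta(t)\le j\le\xi(t)$. *)

theory Defs
  imports "HOL-Analysis.Analysis"
begin

end

theory Submission
  imports Defs
begin

lemma at_pos_within: "(t::real) > 0 \<Longrightarrow> at t within {0..} = at t"
  by (rule at_within_nhd[where S="{0<..}"]) auto
lemma deriv_pos: "(t::real) > 0 \<Longrightarrow> (f has_real_derivative D) (at t within {0..}) \<Longrightarrow> (f has_real_derivative D) (at t)"
  by (simp add: at_pos_within)
lemma cont_pos: "(t::real) > 0 \<Longrightarrow> continuous_on {0..} f \<Longrightarrow> isCont f t"
  by (metis at_pos_within atLeast_iff continuous_on_eq_continuous_within less_eq_real_def)
lemma left_min_deriv:
  fixes f :: "real \<Rightarrow> real"
  assumes "(f has_real_derivative D) (at x)" "\<delta> > 0" "\<And>s. x - \<delta> < s \<Longrightarrow> s < x \<Longrightarrow> f x \<le> f s"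
  shows "D \<le> 0"
proof (rule ccontr)
  assume "\<not> D \<le> 0"
  then obtain e where e: "e > 0" "\<And>h. h > 0 \<Longrightarrow> h < e \<Longrightarrow> f (x - h) < f x"
    using DERIV_pos_inc_left[OF assms(1)] by force
  have "f (x - min e \<delta> / 2) < f x" using e by (simp add: assms(2))
  moreover have "f x \<le> f (x - min e \<delta> / 2)" using assms(2,3) e(1) by simp
  ultimately show False by simp
qed
lemma endpoint0:
  fixes f :: "real \<Rightarrow> real"
  assumes "(f has_real_derivative D) (at 0 within {0..1})" "\<And>y. y \<in> {0..1} \<Longrightarrow> f 0 \<le> f y"
  shows "D \<ge> 0"
proof -
  have "((\<lambda>y. (f y - f 0) / (y - 0)) \<longlongrightarrow> D) (at_right 0)"
    using assms(1) by (simp add: has_field_derivative_iff at_within_Icc_at_right)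
  moreover have "eventually (\<lambda>y. 0 \<le> (f y - f 0) / (y - 0)) (at_right (0::real))"
    unfolding eventually_at_right_field
    by (rule exI[of _ 1]) (use assms(2) in auto)
  ultimately show ?thesis by (rule tendsto_lowerbound) simp
qed
lemma endpoint1:
  fixes f :: "real \<Rightarrow> real"
  assumes "(f has_real_derivative D) (at 1 within {0..1})" "\<And>y. y \<in> {0..1} \<Longrightarrow> f 1 \<le> f y"
  shows "D \<le> 0"
proof -
  have "((\<lambda>y. (f y - f 1) / (y - 1)) \<longlongrightarrow> D) (at_left 1)"
    using assms(1) by (simp add: has_field_derivative_iff at_within_Icc_at_left)
  moreover have "eventually (\<lambda>y. (f y - f 1) / (y - 1) \<le> 0) (at_left (1::real))"
    unfolding eventually_at_left_field
    by (rule exI[of _ 0]) (use assms(2) in \<open>auto simp: divide_nonneg_neg\<close>)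
  ultimately show ?thesis by (rule tendsto_upperbound) simp
qed
lemma interior_min:
  fixes f f' :: "real \<Rightarrow> real"
  assumes x: "0 < x" "x < 1"
    and d1: "\<And>y. 0 < y \<Longrightarrow> y < 1 \<Longrightarrow> (f has_real_derivative f' y) (at y)"
    and d2: "(f' has_real_derivative D) (at x)"
    and mn: "\<And>y. y \<in> {0..1} \<Longrightarrow> f x \<le> f y"
  shows "f' x = 0 \<and> D \<ge> 0"
proof -
  have z: "f' x = 0"
    apply (rule DERIV_local_min[OF d1[OF x], of "min x (1-x)"])
    using x apply simp
    using x mn by (auto simp: abs_if)
  show ?thesis
  proof (rule ccontr)
    assume "\<not> ?thesis"
    then have "D < 0" using z by auto
    then obtain e where e: "e > 0" "\<And>h. h > 0 \<Longrightarrow> h < e \<Longrightarrow> f' (x + h) < f' x"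
      using DERIV_neg_dec_right[OF d2] by force
    define h where "h = min e (1 - x) / 2"
    have h: "h > 0" "h < e" "x + h < 1" using e x unfolding h_def min_def by (auto simp: field_simps)
    obtain z where zz: "z > x" "z < x + h" "f (x + h) - f x = (x + h - x) * f' z"
      using MVT2[of x "x+h" f f'] h x d1 by auto
    have "f' z < 0" using e(2)[of "z - x"] zz h z by auto
    then have "h * f' z < 0" using h(1) by (simp add: mult_pos_neg)
    then have "f (x + h) < f x" using zz by simp
    moreover have "f x \<le> f (x + h)" using mn h x by auto
    ultimately show False by simp
  qed
qed
lemma dexp1: "((\<lambda>y. v y) has_real_derivative vt) (at ts) \<Longrightarrow> ((\<lambda>s. exp (- lam * s) * v s) has_real_derivative
                  (exp (- lam * ts) * (- lam) * v ts + exp (- lam * ts) * vt)) (at ts)"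
  by (auto intro!: derivative_eq_intros)
lemma dexp2: "((\<lambda>y. \<rho> y) has_real_derivative vt) (at ts) \<Longrightarrow> ((\<lambda>s. k * (exp (- lam * s) * \<rho> s)) has_real_derivative
                  k * (exp (- lam * ts) * (- lam) * \<rho> ts + exp (- lam * ts) * vt)) (at ts)"
  by (auto intro!: derivative_eq_intros)
theorem propositionB2:
  fixes \<alpha> \<beta> d :: real
    and c :: "int \<Rightarrow> real \<Rightarrow> real"
    and \<zeta> \<xi> :: "real \<Rightarrow> real"
    and \<rho> \<rho>' :: "int \<Rightarrow> real \<Rightarrow> real"
    and v vt vx vxx :: "int \<Rightarrow> real \<Rightarrow> real \<Rightarrow> real"
  assumes pos: "\<alpha> > 0" "\<beta> > 0" "d > 0"
    and c_meas: "\<And>j. c j \<in> borel_measurable lborel"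
    and c_bdd: "\<exists>M. \<forall>j. AE t in lborel. t > 0 \<longrightarrow> \<bar>c j t\<bar> \<le> M"
    and \<zeta>_cont: "continuous_on {0..} \<zeta>"
    and \<xi>_cont: "continuous_on {0..} \<xi>"
    and \<rho>_deriv: "\<And>j t. t \<ge> 0 \<Longrightarrow> (\<rho> j has_real_derivative \<rho>' j t) (at t within {0..})"
    and \<rho>'_cont: "\<And>j. continuous_on {0..} (\<rho>' j)"
    and v_cont: "\<And>j. continuous_on ({0..} \<times> {0..1}) (\<lambda>(t, x). v j t x)"
    and vt_deriv: "\<And>j t x. t > 0 \<Longrightarrow> 0 < x \<Longrightarrow> x < 1 \<Longrightarrow>
                   ((\<lambda>s. v j s x) has_real_derivative vt j t x) (at t)"
    and vt_cont: "\<And>j. continuous_on ({0<..} \<times> {0<..<1}) (\<lambda>(t, x). vt j t x)"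
    and vx_deriv: "\<And>j t x. t > 0 \<Longrightarrow> x \<in> {0..1} \<Longrightarrow>
                   ((\<lambda>y. v j t y) has_real_derivative vx j t x) (at x within {0..1})"
    and vx_cont: "\<And>j. continuous_on ({0<..} \<times> {0..1}) (\<lambda>(t, x). vx j t x)"
    and vxx_deriv: "\<And>j t x. t > 0 \<Longrightarrow> 0 < x \<Longrightarrow> x < 1 \<Longrightarrow>
                   ((\<lambda>y. vx j t y) has_real_derivative vxx j t x) (at x)"
    and vxx_cont: "\<And>j. continuous_on ({0<..} \<times> {0<..<1}) (\<lambda>(t, x). vxx j t x)"
    and eq_v: "\<And>j t x. t > 0 \<Longrightarrow> \<zeta> t \<le> of_int j \<Longrightarrow> of_int j \<le> \<xi> t \<Longrightarrow>
                   0 < x \<Longrightarrow> x < 1 \<Longrightarrow> vt j t x - d * vxx j t x \<ge> 0"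
    and eq_\<rho>: "\<And>j t. t > 0 \<Longrightarrow> \<zeta> t \<le> of_int j \<Longrightarrow> of_int j \<le> \<xi> t \<Longrightarrow>
                   \<rho>' j t - c j t * \<rho> j t \<ge> \<alpha> * (v j t 0 + v (j - 1) t 1)"
    and bc0: "\<And>j t. t > 0 \<Longrightarrow> \<zeta> t \<le> of_int j \<Longrightarrow> of_int j \<le> \<xi> t \<Longrightarrow>
                   - d * vx j t 0 + \<alpha> * v j t 0 \<ge> \<beta> * \<rho> j t"
    and bc1: "\<And>j t. t > 0 \<Longrightarrow> \<zeta> t \<le> of_int j \<Longrightarrow> of_int j \<le> \<xi> t \<Longrightarrow>
                   d * vx j t 1 + \<alpha> * v j t 1 \<ge> \<beta> * \<rho> (j + 1) t"
    and init: "\<And>j x. x \<in> {0..1} \<Longrightarrow> \<zeta> 0 - 1 \<le> of_int j \<Longrightarrow> of_int j \<le> \<xi> 0 + 1 \<Longrightarrow>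
                   v j 0 x \<ge> 0 \<and> \<rho> j 0 \<ge> 0"
    and side: "\<And>j t x. t > 0 \<Longrightarrow> x \<in> {0..1} \<Longrightarrow>
                   (\<zeta> t - 1 \<le> of_int j \<and> of_int j < \<zeta> t) \<or> (\<xi> t < of_int j \<and> of_int j \<le> \<xi> t + 1) \<Longrightarrow>
                   v j t x \<ge> 0 \<and> \<rho> j t \<ge> 0"
  shows "\<forall>t>0. \<forall>x\<in>{0..1}. \<forall>j::int. \<zeta> t \<le> of_int j \<and> of_int j \<le> \<xi> t \<longrightarrow>
           v j t x \<ge> 0 \<and> \<rho> j t \<ge> 0"
proof (intro allI impI ballI)
  fix t0 x0 :: real and j0 :: int
  assume t0: "t0 > 0" and x0: "x0 \<in> {0..1}" and j0: "\<zeta> t0 \<le> of_int j0 \<and> of_int j0 \<le> \<xi> t0"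
  show "v j0 t0 x0 \<ge> 0 \<and> \<rho> j0 t0 \<ge> 0"
  proof (rule ccontr)
    assume neg: "\<not> (v j0 t0 x0 \<ge> 0 \<and> \<rho> j0 t0 \<ge> 0)"
    obtain M where M: "\<And>j. AE t in lborel. t > 0 \<longrightarrow> \<bar>c j t\<bar> \<le> M" using c_bdd by blast
    have rho_cont: "continuous_on {0..} (\<rho> j)" for j
      using \<rho>_deriv by (meson DERIV_continuous atLeast_iff continuous_on_eq_continuous_within)
    have vs_cont: "continuous_on {0..} (\<lambda>s. v j s x)" if hx: "x \<in> {0..1}" for j x
    proof -
      have "continuous_on {0..} (\<lambda>s. (\<lambda>(t, x). v j t x) (s, x))"
        by (rule continuous_on_compose2[OF v_cont]) (use hx in \<open>auto intro!: continuous_intros\<close>)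
      then show ?thesis by simp
    qed
    have rho_ineq: "\<rho>' j t \<ge> M * \<rho> j t + \<alpha> * (v j t 0 + v (j - 1) t 1)"
      if t: "t > 0" "\<zeta> t \<le> of_int j" "of_int j \<le> \<xi> t" "\<rho> j t < 0" for j t
    proof (rule ccontr)
      assume nc: "\<not> ?thesis"
      define F where "F s = M * \<rho> j s + \<alpha> * (v j s 0 + v (j - 1) s 1) - \<rho>' j s" for s
      have c1: "isCont (\<rho> j) t" "isCont (\<lambda>s. v j s 0) t" "isCont (\<lambda>s. v (j-1) s 1) t"
        "isCont (\<rho>' j) t" "isCont \<zeta> t" "isCont \<xi> t"
        using cont_pos[OF t(1) rho_cont] cont_pos[OF t(1) vs_cont[of 0 j]] cont_pos[OF t(1) vs_cont[of 1 "j-1"]]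
          cont_pos[OF t(1) \<rho>'_cont] cont_pos[OF t(1) \<zeta>_cont] cont_pos[OF t(1) \<xi>_cont] by auto
      have Fc: "isCont F t" unfolding F_def by (intro continuous_intros c1)
      have ev1: "eventually (\<lambda>s. 0 < F s) (at t)"
        using order_tendstoD(1)[OF isContD[OF Fc], of 0] nc by (simp add: F_def)
      have ev2: "eventually (\<lambda>s. \<rho> j s < 0) (at t)"
        using order_tendstoD(2)[OF isContD[OF c1(1)], of 0] t by simp
      have ev3: "eventually (\<lambda>s. \<zeta> s < of_int j + 1) (at t)"
        using order_tendstoD(2)[OF isContD[OF c1(5)], of "of_int j + 1"] t by simp
      have ev4: "eventually (\<lambda>s. of_int j - 1 < \<xi> s) (at t)"
        using order_tendstoD(1)[OF isContD[OF c1(6)], of "of_int j - 1"] t by simp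
      have ev5: "eventually (\<lambda>s. 0 < s) (at t)"
        using order_tendstoD(1)[OF tendsto_ident_at, of 0 t UNIV] t by simp
      have "eventually (\<lambda>s. 0 < F s \<and> \<rho> j s < 0 \<and> \<zeta> s < of_int j + 1 \<and> of_int j - 1 < \<xi> s \<and> 0 < s) (at t)"
        by (intro eventually_conj ev1 ev2 ev3 ev4 ev5)
      then obtain dd where dd: "dd > 0" and
        P: "\<And>s. s \<noteq> t \<Longrightarrow> dist s t < dd \<Longrightarrow> 0 < F s \<and> \<rho> j s < 0 \<and> \<zeta> s < of_int j + 1 \<and> of_int j - 1 < \<xi> s \<and> 0 < s"
        unfolding eventually_at by auto
      have bad: "\<not> (s > 0 \<longrightarrow> \<bar>c j s\<bar> \<le> M)" if s: "s \<in> {t<..<t+dd}" for s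
      proof
        assume cs: "s > 0 \<longrightarrow> \<bar>c j s\<bar> \<le> M"
        have Ps: "0 < F s" "\<rho> j s < 0" "\<zeta> s < of_int j + 1" "of_int j - 1 < \<xi> s" "0 < s"
          using P[of s] s by (auto simp: dist_real_def)
        show False
        proof (cases "\<zeta> s \<le> of_int j \<and> of_int j \<le> \<xi> s")
          case True
          have e: "\<rho>' j s - c j s * \<rho> j s \<ge> \<alpha> * (v j s 0 + v (j - 1) s 1)"
            using eq_\<rho>[OF Ps(5)] True by auto
          have "c j s \<le> M" using cs Ps(5) by auto
          then have "c j s * \<rho> j s \<ge> M * \<rho> j s" using Ps(2) by (simp add: mult_right_mono_neg)
          then show False using e Ps(1) by (simp add: F_def)
        next
          case False
          then have "\<rho> j s \<ge> 0" using side[of s 0 j] Ps by auto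
          then show False using Ps by simp
        qed
      qed
      have "AE s in lborel. s \<notin> {t<..<t+dd}"
        using M[of j] by (rule eventually_mono) (use bad in blast)
      then have "emeasure lborel {t<..<t+dd} = 0"
        by (subst (asm) AE_iff_measurable[of "{t<..<t+dd}"]) auto
      moreover have "emeasure lborel {t<..<t+dd} = ennreal dd" using dd by simp
      ultimately show False using dd by simp
    qed
    define \<kappa> where "\<kappa> = 2 * \<beta> / \<alpha>"
    have \<kappa>: "\<kappa> > 0" using pos by (simp add: \<kappa>_def)
    define lam where "lam = \<bar>M\<bar> + 2 * \<alpha> * \<kappa> + 1"
    have ak: "0 < 2 * \<alpha> * \<kappa>" using pos \<kappa> by simp
    have lam: "lam > 0" unfolding lam_def using ak abs_ge_zero[of M] by linarith
    define g where "g j t x = min (exp (- lam * t) * v j t x) (\<kappa> * (exp (- lam * t) * \<rho> j t))" for j t x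
    define K where "K j = {p::real\<times>real. fst p \<in> {0..t0} \<and> snd p \<in> {0..1} \<and> \<zeta> (fst p) - 1 \<le> of_int j \<and> of_int j \<le> \<xi> (fst p) + 1}" for j :: int
    have Kcomp: "compact (K j)" for j
    proof -
      let ?B = "{0..t0} \<times> {0..1::real}"
      have f1: "continuous_on ?B (\<lambda>p. \<zeta> (fst p))"
        by (rule continuous_on_compose2[OF \<zeta>_cont continuous_on_fst]) auto
      have f2: "continuous_on ?B (\<lambda>p. \<xi> (fst p))"
        by (rule continuous_on_compose2[OF \<xi>_cont continuous_on_fst]) auto
      have cl1: "closed (?B \<inter> (\<lambda>p. \<zeta> (fst p)) -` {..of_int j + 1})"
        by (rule continuous_closed_preimage[OF f1]) (auto simp: closed_Times)
      have cl2: "closed ((?B \<inter> (\<lambda>p. \<zeta> (fst p)) -` {..of_int j + 1}) \<inter> (\<lambda>p. \<xi> (fst p)) -` {of_int j - 1..})"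
        by (rule continuous_closed_preimage[OF continuous_on_subset[OF f2] cl1]) auto
      have eq: "K j = (?B \<inter> (\<lambda>p. \<zeta> (fst p)) -` {..of_int j + 1}) \<inter> (\<lambda>p. \<xi> (fst p)) -` {of_int j - 1..}"
        by (auto simp: K_def)
      have "bounded (K j)"
        by (rule bounded_subset[OF compact_imp_bounded[OF compact_Times[OF compact_Icc compact_Icc]]])
           (auto simp: K_def)
      then show ?thesis using cl2 eq by (simp add: compact_eq_bounded_closed)
    qed
    have gcont: "continuous_on (K j) (\<lambda>p. g j (fst p) (snd p))" for j
    proof -
      have sub: "K j \<subseteq> {0..} \<times> {0..1}" by (auto simp: K_def)
      have a: "continuous_on (K j) (\<lambda>p. v j (fst p) (snd p))"
        using continuous_on_subset[OF v_cont[of j] sub] by (simp add: case_prod_beta)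
      have b: "continuous_on (K j) (\<lambda>p. \<rho> j (fst p))"
        by (rule continuous_on_compose2[OF rho_cont continuous_on_fst]) (use sub in auto)
      show ?thesis unfolding g_def by (intro continuous_intros a b)
    qed
    obtain Bz where Bz: "\<And>t. t \<in> {0..t0} \<Longrightarrow> \<bar>\<zeta> t\<bar> \<le> Bz"
    proof -
      have "continuous_on {0..t0} \<zeta>" by (rule continuous_on_subset[OF \<zeta>_cont]) auto
      from compact_imp_bounded[OF compact_continuous_image[OF this compact_Icc]]
      show ?thesis unfolding bounded_real by (metis image_eqI that)
    qed
    obtain Bx where Bx: "\<And>t. t \<in> {0..t0} \<Longrightarrow> \<bar>\<xi> t\<bar> \<le> Bx"
    proof -
      have "continuous_on {0..t0} \<xi>" by (rule continuous_on_subset[OF \<xi>_cont]) auto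
      from compact_imp_bounded[OF compact_continuous_image[OF this compact_Icc]]
      show ?thesis unfolding bounded_real by (metis image_eqI that)
    qed
    define N where "N = \<lceil>\<bar>Bz\<bar> + \<bar>Bx\<bar>\<rceil> + 2"
    have inN: "j \<in> {-N..N}" if "p \<in> K j" for j p
    proof -
      have p: "fst p \<in> {0..t0}" "\<zeta> (fst p) - 1 \<le> of_int j" "of_int j \<le> \<xi> (fst p) + 1"
        using that by (auto simp: K_def)
      have a: "\<bar>\<zeta> (fst p)\<bar> \<le> Bz" "\<bar>\<xi> (fst p)\<bar> \<le> Bx" using Bz[OF p(1)] Bx[OF p(1)] by auto
      have c: "\<bar>Bz\<bar> + \<bar>Bx\<bar> \<le> of_int \<lceil>\<bar>Bz\<bar> + \<bar>Bx\<bar>\<rceil>" by (rule le_of_int_ceiling)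
      have n: "real_of_int N = of_int \<lceil>\<bar>Bz\<bar> + \<bar>Bx\<bar>\<rceil> + 2" by (simp add: N_def)
      have "real_of_int j \<le> real_of_int N" "real_of_int (-N) \<le> real_of_int j"
        using a c n p(2,3) abs_le_D1[OF a(1)] abs_le_D2[OF a(1)] abs_le_D1[OF a(2)] abs_le_D2[OF a(2)]
          abs_ge_self[of Bz] abs_ge_self[of Bx] abs_ge_minus_self[of Bz] abs_ge_minus_self[of Bx]
        by linarith+
      then show ?thesis by simp
    qed
    define S where "S = (\<Union>j\<in>{-N..N}. (\<lambda>p. g j (fst p) (snd p)) ` K j)"
    have Scomp: "compact S" unfolding S_def
      by (intro compact_UN finite_atLeastAtMost_int compact_continuous_image gcont Kcomp)
    have t0K: "(t0, x0) \<in> K j0" using t0 x0 j0 by (auto simp: K_def)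
    have "g j0 t0 x0 \<in> S" unfolding S_def using inN[OF t0K] t0K by force
    then have "S \<noteq> {}" by auto
    then obtain s0 where s0: "s0 \<in> S" "\<And>y. y \<in> S \<Longrightarrow> s0 \<le> y" using compact_attains_inf[OF Scomp] by blast
    then obtain js ts xs where sK: "(ts, xs) \<in> K js" and s0eq: "s0 = g js ts xs"
      unfolding S_def by auto
    have gmin: "g js ts xs \<le> g j t x" if "(t, x) \<in> K j" for j t x
      using s0(2)[of "g j t x"] that inN[OF that] s0eq unfolding S_def by force
    have gneg: "g js ts xs < 0"
    proof -
      have "g j0 t0 x0 < 0"
      proof (cases "v j0 t0 x0 \<ge> 0")
        case True
        then have "\<rho> j0 t0 < 0" using neg by auto
        then have "\<kappa> * (exp (- lam * t0) * \<rho> j0 t0) < 0" using \<kappa> by (simp add: mult_pos_neg)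
        then show ?thesis by (simp add: g_def)
      next
        case False
        then have "exp (- lam * t0) * v j0 t0 x0 < 0" by (simp add: mult_pos_neg)
        then show ?thesis by (simp add: g_def)
      qed
      then show ?thesis using gmin[OF t0K] by simp
    qed
    have tsK: "ts \<in> {0..t0}" "xs \<in> {0..1}" "\<zeta> ts - 1 \<le> of_int js" "of_int js \<le> \<xi> ts + 1"
      using sK by (auto simp: K_def)
    have gnn: "g j t x \<ge> 0" if "v j t x \<ge> 0" "\<rho> j t \<ge> 0" for j t x
      using that \<kappa> by (simp add: g_def)
    have ts_pos: "ts > 0"
    proof (rule ccontr)
      assume "\<not> ts > 0"
      then have "ts = 0" using tsK by auto
      then show False using init[of xs js] tsK gnn[of js ts xs] gneg by auto
    qed
    have jin: "\<zeta> ts \<le> of_int js \<and> of_int js \<le> \<xi> ts"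
    proof (rule ccontr)
      assume "\<not> ?thesis"
      then have "v js ts xs \<ge> 0 \<and> \<rho> js ts \<ge> 0" using side[OF ts_pos tsK(2), of js] tsK by auto
      then show False using gnn[of js ts xs] gneg by auto
    qed
    have c2: "isCont \<zeta> ts" "isCont \<xi> ts" using cont_pos[OF ts_pos] \<zeta>_cont \<xi>_cont by auto
    have ev1: "eventually (\<lambda>s. \<zeta> s < of_int js + 1) (at ts)"
      using order_tendstoD(2)[OF isContD[OF c2(1)], of "of_int js + 1"] jin by simp
    have ev2: "eventually (\<lambda>s. of_int js - 1 < \<xi> s) (at ts)"
      using order_tendstoD(1)[OF isContD[OF c2(2)], of "of_int js - 1"] jin by simp
    have ev3: "eventually (\<lambda>s. 0 < s) (at ts)"
      using order_tendstoD(1)[OF tendsto_ident_at, of 0 ts UNIV] ts_pos by simp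
    have "eventually (\<lambda>s. \<zeta> s < of_int js + 1 \<and> of_int js - 1 < \<xi> s \<and> 0 < s) (at ts)"
      by (intro eventually_conj ev1 ev2 ev3)
    then obtain dd where dd: "dd > 0" and
      P: "\<And>s. s \<noteq> ts \<Longrightarrow> dist s ts < dd \<Longrightarrow> \<zeta> s < of_int js + 1 \<and> of_int js - 1 < \<xi> s \<and> 0 < s"
      unfolding eventually_at by auto
    have leftK: "(s, x) \<in> K js" if "ts - dd < s" "s < ts" "x \<in> {0..1}" for s x
      using P[of s] that tsK by (auto simp: K_def dist_real_def)
    have nowK: "(ts, x) \<in> K j" if "x \<in> {0..1}" "j = js \<or> j = js + 1 \<or> j = js - 1" for x j
      using that tsK jin by (auto simp: K_def)
    define E where "E = exp (- lam * ts)"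
    have E: "E > 0" by (simp add: E_def)
    show False
    proof (cases "E * v js ts xs \<le> \<kappa> * (E * \<rho> js ts)")
      case True
      then have geq: "g js ts xs = E * v js ts xs" by (simp add: g_def E_def)
      then have vneg: "v js ts xs < 0" using gneg E by (simp add: mult_less_0_iff)
      have vmin: "v js ts xs \<le> v js ts x" if "x \<in> {0..1}" for x
      proof -
        have "g js ts x \<le> E * v js ts x" unfolding g_def E_def by (rule min.cobounded1)
        then have "E * v js ts xs \<le> E * v js ts x"
          using gmin[OF nowK[OF that, of js]] geq by linarith
        then show ?thesis using E by simp
      qed
      have rhob: "v js ts xs \<le> \<kappa> * \<rho> j ts" if "j = js \<or> j = js + 1" for j
      proof -
        have n: "(ts, 1) \<in> K j" using nowK[of 1 j] that by auto
        have "g j ts 1 \<le> \<kappa> * (E * \<rho> j ts)" unfolding g_def E_def by (rule min.cobounded2)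
        then have "E * v js ts xs \<le> \<kappa> * (E * \<rho> j ts)"
          using gmin[OF n] geq by linarith
        then have "E * v js ts xs \<le> E * (\<kappa> * \<rho> j ts)" by (simp add: algebra_simps)
        then show ?thesis using E by simp
      qed
      have half: "\<beta> * \<rho> j ts \<ge> \<alpha> / 2 * v js ts xs" if "j = js \<or> j = js + 1" for j
      proof -
        have "\<beta> * \<rho> j ts = \<alpha> / 2 * (\<kappa> * \<rho> j ts)" using pos unfolding \<kappa>_def by (simp add: field_simps)
        moreover have "\<alpha> / 2 * v js ts xs \<le> \<alpha> / 2 * (\<kappa> * \<rho> j ts)"
          by (rule mult_left_mono[OF rhob[OF that]]) (use pos in simp)
        ultimately show ?thesis by linarith
      qed
      have avneg: "\<alpha> * v js ts xs < 0" using pos vneg by (simp add: mult_pos_neg)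
      consider "xs = 0" | "xs = 1" | "0 < xs \<and> xs < 1" using tsK by fastforce
      then show False
      proof cases
        case 1
        have "vx js ts 0 \<ge> 0"
          by (rule endpoint0[OF vx_deriv[OF ts_pos, of 0]]) (use vmin 1 in auto)
        then have "d * vx js ts 0 \<ge> 0" using pos by simp
        then show False using bc0[OF ts_pos jin[THEN conjunct1] jin[THEN conjunct2]] half[of js] 1 avneg by simp
      next
        case 2
        have "vx js ts 1 \<le> 0"
          by (rule endpoint1[OF vx_deriv[OF ts_pos, of 1]]) (use vmin 2 in auto)
        then have "d * vx js ts 1 \<le> 0" using pos by (simp add: mult_nonneg_nonpos)
        then show False using bc1[OF ts_pos jin[THEN conjunct1] jin[THEN conjunct2]] half[of "js+1"] 2 avneg by simp
      next
        case 3
        have im: "vx js ts xs = 0 \<and> vxx js ts xs \<ge> 0"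
        proof (rule interior_min[where f = "v js ts" and f' = "vx js ts" and D = "vxx js ts xs"])
          show "((v js ts) has_real_derivative vx js ts y) (at y)" if "0 < y" "y < 1" for y
            using vx_deriv[OF ts_pos, of y] that by (simp add: at_within_Icc_at)
          show "((vx js ts) has_real_derivative vxx js ts xs) (at xs)"
            using vxx_deriv[OF ts_pos] 3 by auto
        qed (use 3 vmin in auto)
        have hd: "((\<lambda>s. exp (- lam * s) * v js s xs) has_real_derivative
                  (exp (- lam * ts) * (- lam) * v js ts xs + exp (- lam * ts) * vt js ts xs)) (at ts)"
          by (rule dexp1) (use vt_deriv[OF ts_pos] 3 in auto)
        have "exp (- lam * ts) * (- lam) * v js ts xs + exp (- lam * ts) * vt js ts xs \<le> 0"
        proof (rule left_min_deriv[OF hd dd])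
          fix s assume s: "ts - dd < s" "s < ts"
          have "g js ts xs \<le> g js s xs" using gmin[OF leftK[OF s tsK(2)]] .
          then show "exp (- lam * ts) * v js ts xs \<le> exp (- lam * s) * v js s xs"
            using geq by (simp add: g_def E_def)
        qed
        then have "E * (vt js ts xs - lam * v js ts xs) \<le> 0" by (simp add: E_def algebra_simps)
        then have "vt js ts xs \<le> lam * v js ts xs" using E by (simp add: mult_le_0_iff)
        moreover have "lam * v js ts xs < 0" using lam vneg by (simp add: mult_pos_neg)
        moreover have "d * vxx js ts xs \<ge> 0" using im pos by simp
        ultimately show False using eq_v[OF ts_pos jin[THEN conjunct1] jin[THEN conjunct2], of xs] 3 by simp
      qed
    next
      case False
      then have geq: "g js ts xs = \<kappa> * (E * \<rho> js ts)" by (simp add: g_def E_def)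
      then have rneg: "\<rho> js ts < 0" using gneg E \<kappa> by (simp add: mult_less_0_iff)
      have vb: "\<kappa> * \<rho> js ts \<le> v j ts x" if "x \<in> {0..1}" "j = js \<or> j = js - 1" for j x
      proof -
        have n: "(ts, x) \<in> K j" using nowK[of x j] that by auto
        have "g j ts x \<le> E * v j ts x" unfolding g_def E_def by (rule min.cobounded1)
        then have "\<kappa> * (E * \<rho> js ts) \<le> E * v j ts x"
          using gmin[OF n] geq by linarith
        then have "E * (\<kappa> * \<rho> js ts) \<le> E * v j ts x" by (simp add: algebra_simps)
        then show ?thesis using E by simp
      qed
      have rd: "(\<rho> js has_real_derivative \<rho>' js ts) (at ts)"
        using deriv_pos[OF ts_pos \<rho>_deriv[of ts js]] ts_pos by simp
      have hd: "((\<lambda>s. \<kappa> * (exp (- lam * s) * \<rho> js s)) has_real_derivative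
                  \<kappa> * (exp (- lam * ts) * (- lam) * \<rho> js ts + exp (- lam * ts) * \<rho>' js ts)) (at ts)"
        by (rule dexp2[OF rd])
      have "\<kappa> * (exp (- lam * ts) * (- lam) * \<rho> js ts + exp (- lam * ts) * \<rho>' js ts) \<le> 0"
      proof (rule left_min_deriv[OF hd dd])
        fix s assume s: "ts - dd < s" "s < ts"
        have "g js ts xs \<le> g js s 0" using gmin[OF leftK[OF s, of 0]] by simp
        then show "\<kappa> * (exp (- lam * ts) * \<rho> js ts) \<le> \<kappa> * (exp (- lam * s) * \<rho> js s)"
          using geq by (simp add: g_def E_def)
      qed
      then have "\<kappa> * (E * (\<rho>' js ts - lam * \<rho> js ts)) \<le> 0" by (simp add: E_def algebra_simps)
      then have "E * (\<rho>' js ts - lam * \<rho> js ts) \<le> 0" using \<kappa> by (simp add: mult_le_0_iff)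
      then have r1: "\<rho>' js ts \<le> lam * \<rho> js ts" using E by (simp add: mult_le_0_iff)
      have r2: "\<rho>' js ts \<ge> M * \<rho> js ts + \<alpha> * (v js ts 0 + v (js - 1) ts 1)"
        using rho_ineq[OF ts_pos jin[THEN conjunct1] jin[THEN conjunct2] rneg] .
      have "v js ts 0 + v (js - 1) ts 1 \<ge> 2 * \<kappa> * \<rho> js ts" using vb[of 0 js] vb[of 1 "js - 1"] by simp
      then have r3: "\<alpha> * (v js ts 0 + v (js - 1) ts 1) \<ge> \<alpha> * (2 * \<kappa> * \<rho> js ts)"
        using pos by (simp add: mult_left_mono)
      have "(lam - M - 2 * \<alpha> * \<kappa>) * \<rho> js ts = lam * \<rho> js ts - M * \<rho> js ts - \<alpha> * (2 * \<kappa> * \<rho> js ts)"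
        by (simp add: algebra_simps)
      then have "(lam - M - 2 * \<alpha> * \<kappa>) * \<rho> js ts \<ge> 0" using r1 r2 r3 by linarith
      moreover have "lam - M - 2 * \<alpha> * \<kappa> > 0" by (simp add: lam_def)
      then have "(lam - M - 2 * \<alpha> * \<kappa>) * \<rho> js ts < 0" using rneg by (rule mult_pos_neg)
      ultimately show False by linarith
    qed
  qed
qed

end
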